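(* Let $I_{CH}$ be an instance of $\varepsilon$-Consensus-Halving with $n$ agents having $k'$-block valuations $v_1,\dots,v_n$ on $[0,1]$, let $x_1\le\dots\le x_m$ be its points of interest, and for $j\in[m-1]$ let $c_{ij}\ge 0$ be the (constant) density of $v_i$ on $[x_j,x_{j+1}]$. Let $I_{SC}$ be the instance with mass distributions $\mu_1,\dots,\mu_n$, where $\mu_i$ has constant density $c_{ij}(x_{j+1}-x_j)$ on the unit square $s_j=[j,j+1]\times[j,j+1]$ for each $j\in[m-1]$ and density $0$ elsewhere. Then from every ($y$-monotone) SC-path with $k$ turns satisfying $|\mu_i(R^+)-\mu_i(R^-)|\le\varepsilon$ for all $i\in[n]$ one obtains a solution of $I_{CH}$ with at most $k+1$ cuts, i.e. a partition of $[0,1]$ by at most $k+1$ cut points into intervals alternately labelled $+$ and $-$, with $|v_i(\mathcal{I}^+)-v_i(\mathcal{I}^-)|\le\varepsilon$ for all $i$, where $\mathcal{I}^\pm$ is the union of intervals labelled $\pm$.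
   Context: A $k'$-block valuation $v_i$ on $[0,1]$ is given by at most $k'$ non-overlapping intervals $[a^\ell_{ij},a^r_{ij}]$ with densities $c_{ij}>0$ (density $0$ elsewhere), normalised so that $v_i([0,1])=1$. The points of interest are the endpoints $a^\ell_{ij},a^r_{ij}$ over all agents and blocks, sorted as $x_1\le\dots\le x_m$. A square-cut-path (SC-path) is a non-self-crossing directed path made of horizontal and vertical segments inside a bounding square containing all $s_j$, allowed to wrap around horizontally; it partitions this square into $R^+$ and $R^-$. A turn is a point where a horizontal and a vertical segment meet; $y$-monotone means the path never moves downwards. *)

theory Defs
  imports "HOL-Analysis.Analysis"
begin

text \<open>A block is a triple (left endpoint, right endpoint, density).\<close>
type_synonym block = "real \<times> real \<times> real"

definition block_valuation :: "nat \<Rightarrow> block list \<Rightarrow> bool" where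
  "block_valuation k' bs \<longleftrightarrow>
     length bs \<le> k' \<and>
     (\<forall>(l, r, c) \<in> set bs. 0 \<le> l \<and> l < r \<and> r \<le> 1 \<and> 0 < c) \<and>
     (\<forall>p < length bs. \<forall>q < length bs. p \<noteq> q \<longrightarrow>
         fst (snd (bs ! p)) \<le> fst (bs ! q) \<or> fst (snd (bs ! q)) \<le> fst (bs ! p)) \<and>
     sum_list (map (\<lambda>(l, r, c). c * (r - l)) bs) = 1"

definition val :: "block list \<Rightarrow> real set \<Rightarrow> real" where
  "val bs A = sum_list (map (\<lambda>(l, r, c). c * measure lborel (A \<inter> {l..r})) bs)"

definition poi :: "nat \<Rightarrow> (nat \<Rightarrow> block list) \<Rightarrow> real list" where
  "poi n B = sorted_list_of_set (\<Union>i\<in>{1..n}. \<Union>(l, r, c) \<in> set (B i). {l, r})"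

text \<open>1-based access: pt xs j = x_j.\<close>
definition pt :: "real list \<Rightarrow> nat \<Rightarrow> real" where
  "pt xs j = xs ! (j - 1)"

definition dens :: "(nat \<Rightarrow> block list) \<Rightarrow> real list \<Rightarrow> nat \<Rightarrow> nat \<Rightarrow> real" where
  "dens B xs i j = sum_list (map (\<lambda>(l, r, c).
      if l \<le> pt xs j \<and> pt xs (Suc j) \<le> r then c else 0) (B i))"

text \<open>Consensus-Halving with cut points ts; s is the label of the leftmost piece.
  ch_part ts s is the union of pieces labelled s (True = +).\<close>
definition ch_part :: "real list \<Rightarrow> bool \<Rightarrow> real set" where
  "ch_part ts s = {x \<in> {0..1}. even (card {i. i < length ts \<and> ts ! i < x}) = s}"

definition square :: "nat \<Rightarrow> (real \<times> real) set" where
  "square j = {real j .. real j + 1} \<times> {real j .. real j + 1}"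

definition mu :: "(nat \<Rightarrow> block list) \<Rightarrow> real list \<Rightarrow> nat \<Rightarrow> (real \<times> real) set \<Rightarrow> real" where
  "mu B xs i R = (\<Sum>j = 1..length xs - 1.
      dens B xs i j * (pt xs (Suc j) - pt xs j) * measure lborel (R \<inter> square j))"

text \<open>A y-monotone SC-path in the bounding square [a,a+L] x [b,b+L] is encoded by
  the increasing list hs of heights of its horizontal segments, which cut the square
  into horizontal strips 0..length hs.  In strip t the path is either a vertical segment
  at abscissa X (vert t = Some X), in which case R+ in that strip is the part left of X
  (ori t) or right of X (not ori t) -- the two sides swap when a horizontal segment wraps
  around -- or the path has no vertical segment there (only possible for the first/last
  strip, when the path starts/ends horizontally on a side), in which case the whole strip
  lies in R+ (ori t) or in R- (not ori t).\<close>
definition hgt :: "real \<Rightarrow> real \<Rightarrow> real list \<Rightarrow> nat \<Rightarrow> real" where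
  "hgt b L hs t = (b # hs @ [b + L]) ! t"

definition ymono_scpath ::
  "real \<Rightarrow> real \<Rightarrow> real \<Rightarrow> real list \<Rightarrow> (nat \<Rightarrow> real option) \<Rightarrow> (nat \<Rightarrow> bool) \<Rightarrow> bool" where
  "ymono_scpath a b L hs vert ori \<longleftrightarrow>
     sorted_wrt (<) hs \<and> (\<forall>h \<in> set hs. b \<le> h \<and> h \<le> b + L) \<and>
     (\<forall>t \<le> length hs. \<forall>X. vert t = Some X \<longrightarrow> a \<le> X \<and> X \<le> a + L) \<and>
     (\<forall>t. 0 < t \<and> t < length hs \<longrightarrow> vert t \<noteq> None) \<and>
     (length hs = 0 \<longrightarrow> vert 0 \<noteq> None) \<and>
     (\<forall>t. 1 \<le> t \<and> t \<le> length hs \<longrightarrow>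
        (case (vert (t - 1), vert t) of
           (Some X, Some X') \<Rightarrow> X \<noteq> X'
         | (None, None) \<Rightarrow> ori (t - 1) \<noteq> ori t
         | _ \<Rightarrow> True))"

text \<open>Number of turns: each horizontal segment meets the (at most two) adjacent
  vertical segments in one turn each.\<close>
definition sc_turns :: "real list \<Rightarrow> (nat \<Rightarrow> real option) \<Rightarrow> nat" where
  "sc_turns hs vert = (\<Sum>t = 1..length hs.
      (if vert (t - 1) \<noteq> None then 1 else 0) + (if vert t \<noteq> None then 1 else 0))"

definition Rplus ::
  "real \<Rightarrow> real \<Rightarrow> real \<Rightarrow> real list \<Rightarrow> (nat \<Rightarrow> real option) \<Rightarrow> (nat \<Rightarrow> bool) \<Rightarrow> (real \<times> real) set" where
  "Rplus a b L hs vert ori = (\<Union>t \<in> {0..length hs}.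
      ({a..a + L} \<times> {hgt b L hs t .. hgt b L hs (Suc t)}) \<inter>
      {p. case vert t of Some X \<Rightarrow> (if ori t then fst p < X else X < fst p) | None \<Rightarrow> ori t})"

definition Rminus ::
  "real \<Rightarrow> real \<Rightarrow> real \<Rightarrow> real list \<Rightarrow> (nat \<Rightarrow> real option) \<Rightarrow> (nat \<Rightarrow> bool) \<Rightarrow> (real \<times> real) set" where
  "Rminus a b L hs vert ori = ({a..a + L} \<times> {b..b + L}) - Rplus a b L hs vert ori"

end

theory Submission
  imports Defs
begin


lemma sandwich:
  fixes S :: "real set"
  assumes "{u<..<v} \<subseteq> S" "S \<subseteq> {u..v}"
  shows "S \<in> sets lborel" "measure lborel S = max 0 (v - u)"
proof -
  have eq: "S = {u<..<v} \<union> (S \<inter> {u,v})" using assms by auto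
  have N: "S \<inter> {u,v} \<in> null_sets lborel" by (rule finite_imp_null_set_lborel) auto
  show "S \<in> sets lborel" by (subst eq) (use N in auto)
  have "measure lborel S = measure lborel {u<..<v}"
    by (subst eq, rule measure_Un_null_set) (use N in auto)
  then show "measure lborel S = max 0 (v - u)" by (cases "u \<le> v") auto
qed

lemma sandwich_fm:
  fixes S :: "real set"
  assumes "{u<..<v} \<subseteq> S" "S \<subseteq> {u..v}"
  shows "S \<in> fmeasurable lborel"
proof (rule fmeasurableI2[of "{u..v}"])
  show "{u..v} \<in> fmeasurable lborel" by (metis cbox_interval fmeasurable_cbox)
qed (use assms sandwich in auto)

lemma prod_meas:
  fixes A B :: "real set"
  assumes "A \<in> fmeasurable lborel" "B \<in> fmeasurable lborel"
  shows "A \<times> B \<in> fmeasurable lborel" "measure lborel (A \<times> B) = measure lborel A * measure lborel B"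
proof -
  have sA: "A \<in> sets lborel" "B \<in> sets lborel" using assms by auto
  have e: "emeasure (lborel::(real\<times>real) measure) (A \<times> B) = emeasure lborel A * emeasure lborel B"
    using lborel.emeasure_pair_measure_Times[OF sA] by (simp add: lborel_prod)
  have s: "A \<times> B \<in> sets (lborel::(real\<times>real) measure)"
    using sA by (metis lborel_prod pair_measureI)
  show "A \<times> B \<in> fmeasurable lborel"
    using e s assms by (auto simp: fmeasurable_def ennreal_mult_less_top)
  show "measure lborel (A \<times> B) = measure lborel A * measure lborel B"
    using e assms by (simp add: measure_def enn2real_mult)
qed




lemma card_app:
  "card {i. i < length (ts @ [q]) \<and> (ts @ [q]) ! i < (x::real)} =
   card {i. i < length ts \<and> ts ! i < x} + (if q < x then 1 else 0)"
proof -
  have "{i. i < length (ts @ [q]) \<and> (ts @ [q]) ! i < x} =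
        {i. i < length ts \<and> ts ! i < x} \<union> (if q < x then {length ts} else {})"
    by (auto simp: nth_append less_Suc_eq)
  then show ?thesis by (auto simp: card_insert_if)
qed

lemma cuts_exist:
  fixes f :: "real \<Rightarrow> bool"
  assumes "finite Q" "\<forall>x y. x \<le> y \<longrightarrow> {x..y} \<inter> Q = {} \<longrightarrow> f x = f y"
  shows "\<exists>ts s. sorted ts \<and> set ts \<subseteq> Q \<and> length ts \<le> card Q \<and>
     (\<forall>x. x \<notin> Q \<longrightarrow> (even (card {i. i < length ts \<and> ts!i < x}) = s) = f x)"
  using assms
proof (induction "card Q" arbitrary: Q f)
  case 0
  then have Q: "Q = {}" by auto
  have "f x = f 0" for x using 0(3) Q by (cases "x \<le> 0") (simp, metis linorder_le_cases inf_bot_right)+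
  then show ?case by (intro exI[of _ "[]"] exI[of _ "f 0"]) (auto simp: Q)
next
  case (Suc c)
  define q where "q = Max Q"
  have Qne: "Q \<noteq> {}" using Suc(2) by auto
  have qQ: "q \<in> Q" using Qne Suc(3) by (simp add: q_def)
  have qmax: "y \<le> q" if "y \<in> Q" for y using that Suc(3) by (simp add: q_def)
  define Q0 where "Q0 = Q - {q}"
  have fQ0: "finite Q0" using Suc(3) by (simp add: Q0_def)
  have cQ0: "c = card Q0" using Suc(2) qQ Suc(3) by (simp add: Q0_def)
  have Q0lt: "y < q" if "y \<in> Q0" for y using that qmax by (force simp: Q0_def)
  define p where "p = (if Q0 = {} then q - 1 else (Max Q0 + q) / 2)"
  have pq: "p < q" using Q0lt fQ0 by (auto simp: p_def)
  have p0: "y < p" if "y \<in> Q0" for y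
  proof -
    have ne: "Q0 \<noteq> {}" using that by auto
    then have "y \<le> Max Q0" "Max Q0 < q" using that fQ0 Q0lt by auto
    then show ?thesis using ne by (auto simp: p_def)
  qed
  have cellQ: "\<And>x y. x \<le> y \<Longrightarrow> {x..y} \<inter> Q = {} \<Longrightarrow> f x = f y" using Suc(4) by blast
  define f0 where "f0 x = (if q \<le> x then f p else f x)" for x
  have cell0: "\<forall>x y. x \<le> y \<longrightarrow> {x..y} \<inter> Q0 = {} \<longrightarrow> f0 x = f0 y"
  proof (intro allI impI)
    fix x y :: real assume xy: "x \<le> y" and E: "{x..y} \<inter> Q0 = {}"
    show "f0 x = f0 y"
    proof (cases "y < q")
      case True
      have "{x..y} \<inter> Q = {}" using E True by (auto simp: Q0_def)
      then show ?thesis using True xy cellQ by (auto simp: f0_def)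
    next
      case False
      show ?thesis
      proof (cases "q \<le> x")
        case True then show ?thesis using False by (simp add: f0_def)
      next
        case qx: False
        have xgt: "z < x" if zQ: "z \<in> Q0" for z
        proof (rule ccontr)
          assume "\<not> z < x"
          then have "z \<in> {x..y}" using Q0lt[OF zQ] False by auto
          then show False using E zQ by blast
        qed
        have "f x = f p"
        proof (cases "x \<le> p")
          case True
          have "{x..p} \<inter> Q = {}"
          proof (rule ccontr)
            assume "{x..p} \<inter> Q \<noteq> {}"
            then obtain w where w: "w \<in> Q" "x \<le> w" "w \<le> p" by auto
            then have "w \<in> Q0" using pq by (auto simp: Q0_def)
            then show False using xgt w by force
          qed
          then show ?thesis using True cellQ by blast
        next
          case False
          have "{p..x} \<inter> Q = {}"
          proof (rule ccontr)
            assume "{p..x} \<inter> Q \<noteq> {}"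
            then obtain w where w: "w \<in> Q" "p \<le> w" "w \<le> x" by auto
            then have "w \<in> Q0" using qx by (auto simp: Q0_def)
            then show False using p0 w by force
          qed
          then show ?thesis using False cellQ by (metis linorder_le_cases)
        qed
        then show ?thesis using qx False by (auto simp: f0_def)
      qed
    qed
  qed
  obtain ts s where ts: "sorted ts" "set ts \<subseteq> Q0" "length ts \<le> card Q0"
    "\<forall>x. x \<notin> Q0 \<longrightarrow> (even (card {i. i < length ts \<and> ts!i < x}) = s) = f0 x"
    using Suc(1)[OF cQ0 fQ0 cell0] by blast
  have right: "f x = f (q+1)" if "q < x" for x
  proof -
    have "{min x (q+1)..max x (q+1)} \<inter> Q = {}"
    proof (rule ccontr)
      assume "{min x (q+1)..max x (q+1)} \<inter> Q \<noteq> {}"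
      then obtain w where w: "w \<in> Q" "min x (q+1) \<le> w" by auto
      then show False using qmax[OF w(1)] that by linarith
    qed
    then show ?thesis using cellQ[of "min x (q+1)" "max x (q+1)"] by (cases "x \<le> q+1") auto
  qed
  show ?case
  proof (cases "f (q+1) = f p")
    case True
    show ?thesis
    proof (intro exI[of _ ts] exI[of _ s] conjI allI impI)
      show "sorted ts" "set ts \<subseteq> Q" using ts by (auto simp: Q0_def)
      show "length ts \<le> card Q" using ts cQ0 Suc(2) by simp
      fix x assume "x \<notin> Q"
      then have "x \<notin> Q0" "x \<noteq> q" using qQ by (auto simp: Q0_def)
      then show "(even (card {i. i < length ts \<and> ts!i < x}) = s) = f x"
        using ts(4) True right[of x] by (cases "q < x") (auto simp: f0_def)
    qed
  next
    case False
    show ?thesis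
    proof (intro exI[of _ "ts @ [q]"] exI[of _ s] conjI allI impI)
      show "sorted (ts @ [q])" using ts Q0lt by (auto simp: sorted_append less_imp_le)
      show "set (ts @ [q]) \<subseteq> Q" using ts qQ by (auto simp: Q0_def)
      show "length (ts @ [q]) \<le> card Q" using ts cQ0 Suc(2) by simp
      fix x assume "x \<notin> Q"
      then have "x \<notin> Q0" "x \<noteq> q" using qQ by (auto simp: Q0_def)
      then show "(even (card {i. i < length (ts @ [q]) \<and> (ts @ [q])!i < x}) = s) = f x"
        using ts(4) False right[of x] unfolding card_app by (cases "q < x") (auto simp: f0_def)
    qed
  qed
qed




lemma cc_arith:
  fixes h0 h1 X :: real and j :: int
  assumes h: "h0 \<le> h1"
  defines "C \<equiv> max h0 (of_int \<lfloor>X\<rfloor>) + (X - of_int \<lfloor>X\<rfloor>) * (min h1 (of_int \<lfloor>X\<rfloor> + 1) - max h0 (of_int \<lfloor>X\<rfloor>))"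
  shows "max 0 (min (min h1 (of_int j+1)) C - max h0 (of_int j)) = max 0 (min (of_int j+1) X - of_int j) * max 0 (min h1 (of_int j+1) - max h0 (of_int j)) \<and>
     max 0 (min h1 (of_int j+1) - max (max h0 (of_int j)) C) = max 0 (of_int j+1 - max (of_int j) X) * max 0 (min h1 (of_int j+1) - max h0 (of_int j))"
proof -
  define j0 where "j0 = \<lfloor>X\<rfloor>"
  have f1: "of_int j0 \<le> X" "X < of_int j0 + 1" unfolding j0_def by linarith+
  define P0 where "P0 = max h0 (of_int j0)"
  define P1 where "P1 = min h1 (of_int j0 + 1)"
  define th where "th = X - of_int j0"
  have th: "0 \<le> th" "th < 1" using f1 by (auto simp: th_def)
  have Cd: "C = P0 + th * (P1 - P0)" by (simp add: C_def P0_def P1_def th_def j0_def)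
  have Cb: "min P0 P1 \<le> C \<and> C \<le> max P0 P1"
  proof (cases "P0 \<le> P1")
    case True
    have "0 \<le> th * (P1 - P0)" "th * (P1 - P0) \<le> P1 - P0" using th True
      by (auto intro: mult_nonneg_nonneg mult_left_le_one_le)
    then show ?thesis using True Cd by auto
  next
    case False
    have "th * (P1 - P0) \<le> 0" using th False by (auto intro: mult_nonneg_nonpos)
    moreover have "0 \<le> (1 - th) * (P0 - P1)" using th False by auto
    ultimately show ?thesis using False Cd by (auto simp: algebra_simps)
  qed
  consider (lt) "j < j0" | (eq) "j = j0" | (gt) "j > j0" by linarith
  then show ?thesis
  proof cases
    case lt
    then have jj: "of_int j + 1 \<le> (of_int j0::real)" by linarith
    have c: "C \<ge> min h1 (of_int j+1)" using Cb jj unfolding P0_def P1_def by auto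
    have e1: "min (of_int j+1) X - of_int j = 1" using jj f1 by auto
    have e2: "max 0 (of_int j+1 - max (of_int j) X) = 0" using jj f1 by auto
    have e3: "min (min h1 (of_int j+1)) C = min h1 (of_int j+1)" using c by auto
    have e4: "max 0 (min h1 (of_int j+1) - max (max h0 (of_int j)) C) = 0" using c by auto
    show ?thesis unfolding e1 e2 e3 e4 by simp
  next
    case gt
    then have jj: "of_int j0 + 1 \<le> (of_int j::real)" by linarith
    have c: "C \<le> max h0 (of_int j)" using Cb jj unfolding P0_def P1_def by auto
    have e1: "max 0 (min (of_int j+1) X - of_int j) = 0" using jj f1 by auto
    have e2: "of_int j+1 - max (of_int j) X = 1" using jj f1 by auto
    have e3: "max (max h0 (of_int j)) C = max h0 (of_int j)" using c by auto
    have e4: "max 0 (min (min h1 (of_int j+1)) C - max h0 (of_int j)) = 0" using c by auto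
    show ?thesis unfolding e1 e2 e3 e4 by simp
  next
    case eq
    have a: "min (of_int j+1) X - of_int j = th" "of_int j+1 - max (of_int j) X = 1 - th"
      using eq f1 by (auto simp: th_def)
    have p: "max h0 (of_int j) = P0" "min h1 (of_int j+1) = P1" using eq by (auto simp: P0_def P1_def)
    show ?thesis
    proof (cases "P0 \<le> P1")
      case True
      then have "min P1 C = C" "max P0 C = C" using Cb by auto
      then show ?thesis unfolding a p using True th Cd by (auto simp: algebra_simps max_def)
    next
      case False
      then have "min P1 C - P0 \<le> 0" "P1 - max P0 C \<le> 0" by auto
      then show ?thesis unfolding a p using False th by (auto simp: max_def)
    qed
  qed
qed




lemma fm_Icc: "{a..b::real} \<in> fmeasurable lborel"
  by (metis cbox_interval fmeasurable_cbox)

lemma fm_Int_Icc: "A \<in> sets lborel \<Longrightarrow> A \<inter> {a..b::real} \<in> fmeasurable lborel"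
  by (rule fmeasurableI2[OF fm_Icc]) auto

lemma meas_Int_pt: "A \<in> sets lborel \<Longrightarrow> measure lborel (A \<inter> {a..a::real}) = 0"
proof -
  assume A: "A \<in> sets lborel"
  have "measure lborel (A \<inter> {a..a}) \<le> measure lborel {a..a}"
    by (rule measure_mono_fmeasurable[OF _ _ fm_Icc]) (use A in auto)
  then show ?thesis by (metis antisym diff_self measure_lborel_Icc measure_nonneg order_refl)
qed

lemma meas_split:
  fixes A :: "real set"
  assumes "A \<in> sets lborel" "u \<le> v" "v \<le> w"
  shows "measure lborel (A \<inter> {u..w}) = measure lborel (A \<inter> {u..v}) + measure lborel (A \<inter> {v..w})"
proof -
  have eq: "A \<inter> {u..w} = (A \<inter> {u..v}) \<union> (A \<inter> {v..w})" using assms by auto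
  have fm: "A \<inter> {a..b} \<in> fmeasurable lborel" for a b :: real
    using fm_Int_Icc assms(1) by blast
  have ae: "AE x in lborel. x \<notin> A \<inter> {u..v} \<or> x \<notin> A \<inter> {v..w}"
    by (rule AE_I'[of "{v}"]) (auto intro: finite_imp_null_set_lborel)
  show ?thesis unfolding eq by (rule measure_Un_AE[OF ae fm fm])
qed

lemma meas_tele:
  fixes A :: "real set"
  assumes "A \<in> sets lborel" "sorted xs" "p \<le> q" "q < length xs"
  shows "measure lborel (A \<inter> {xs!p..xs!q}) = (\<Sum>j\<in>{Suc p..q}. measure lborel (A \<inter> {xs!(j-1)..xs!j}))"
  using assms(3,4)
proof (induction q)
  case 0
  then have "p = 0" by simp
  moreover have "measure lborel (A \<inter> {xs!0..xs!0}) = 0" using meas_Int_pt assms(1) by blast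
  ultimately show ?case by simp
next
  case (Suc q)
  show ?case
  proof (cases "p = Suc q")
    case True
    have "measure lborel (A \<inter> {xs!p..xs!p}) = 0" using meas_Int_pt assms(1) by blast
    then show ?thesis using True by simp
  next
    case False
    then have pq: "p \<le> q" using Suc by simp
    have m: "xs!p \<le> xs!q" "xs!q \<le> xs!Suc q" using assms(2) pq Suc(3) by (auto intro: sorted_nth_mono)
    have "measure lborel (A \<inter> {xs!p..xs!Suc q}) = measure lborel (A \<inter> {xs!p..xs!q}) + measure lborel (A \<inter> {xs!q..xs!Suc q})"
      by (rule meas_split[OF assms(1) m])
    also have "\<dots> = (\<Sum>j\<in>{Suc p..q}. measure lborel (A \<inter> {xs!(j-1)..xs!j})) + measure lborel (A \<inter> {xs!q..xs!Suc q})"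
      using Suc pq by simp
    also have "\<dots> = (\<Sum>j\<in>{Suc p..Suc q}. measure lborel (A \<inter> {xs!(j-1)..xs!j}))"
    proof -
      have e: "{Suc p..Suc q} = insert (Suc q) {Suc p..q}" using pq by auto
      show ?thesis unfolding e by (subst sum.insert) auto
    qed
    finally show ?thesis .
  qed
qed




lemma strict_nth_le_iff:
  fixes xs :: "real list"
  assumes "sorted_wrt (<) xs" "i < length xs" "j < length xs"
  shows "xs!i \<le> xs!j \<longleftrightarrow> i \<le> j"
proof
  assume "xs!i \<le> xs!j"
  then show "i \<le> j" using assms sorted_wrt_nth_less[OF assms(1), of j i] by (meson leI not_less)
next
  assume "i \<le> j"
  then show "xs!i \<le> xs!j" using assms sorted_wrt_nth_less[OF assms(1), of i j] by (cases "i = j") auto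
qed

lemma block_decomp:
  assumes sw: "sorted_wrt (<) xs" and blk: "l \<in> set xs" "r \<in> set xs" "l < r" and A: "A \<in> sets lborel"
  shows "c * measure lborel (A \<inter> {l..r}) = (\<Sum>j=1..length xs - 1. (if l \<le> pt xs j \<and> pt xs (Suc j) \<le> r then c else 0) * measure lborel (A \<inter> {pt xs j..pt xs (Suc j)}))"
proof -
  obtain p q where pq: "p < length xs" "q < length xs" "l = xs!p" "r = xs!q"
    using blk by (metis in_set_conv_nth)
  have "p < q" using pq blk(3) strict_nth_le_iff[OF sw pq(2) pq(1)] by (meson not_le)
  have sx: "sorted xs" using sw by (rule strict_sorted_imp_sorted)
  define M where "M j = measure lborel (A \<inter> {pt xs j..pt xs (Suc j)})" for j
  have "(\<Sum>j=1..length xs - 1. (if l \<le> pt xs j \<and> pt xs (Suc j) \<le> r then c else 0) * M j)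
      = (\<Sum>j\<in>{1..length xs - 1}. (if j \<in> {Suc p..q} then c * M j else 0))"
  proof (rule sum.cong[OF refl])
    fix j assume j: "j \<in> {1..length xs - 1}"
    then have j1: "j - 1 < length xs" "j < length xs" by auto
    have "(l \<le> pt xs j \<and> pt xs (Suc j) \<le> r) \<longleftrightarrow> (p \<le> j - 1 \<and> j \<le> q)"
      unfolding pt_def pq using strict_nth_le_iff[OF sw pq(1) j1(1)] strict_nth_le_iff[OF sw j1(2) pq(2)] by simp
    also have "\<dots> \<longleftrightarrow> j \<in> {Suc p..q}" using j by auto
    finally show "(if l \<le> pt xs j \<and> pt xs (Suc j) \<le> r then c else 0) * M j = (if j \<in> {Suc p..q} then c * M j else 0)"
      by simp
  qed
  also have "\<dots> = (\<Sum>j\<in>{1..length xs - 1} \<inter> {Suc p..q}. c * M j)"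
    by (rule sum.inter_restrict[symmetric]) simp
  also have "{1..length xs - 1} \<inter> {Suc p..q} = {Suc p..q}" using pq by auto
  also have "(\<Sum>j\<in>{Suc p..q}. c * M j) = c * (\<Sum>j\<in>{Suc p..q}. measure lborel (A \<inter> {xs!(j-1)..xs!j}))"
    by (simp add: sum_distrib_left M_def pt_def)
  also have "\<dots> = c * measure lborel (A \<inter> {l..r})"
    using meas_tele[OF A sx, of p q] \<open>p < q\<close> pq by simp
  finally show ?thesis by (simp add: M_def)
qed

lemma val_decomp:
  assumes sw: "sorted_wrt (<) xs" and bs: "\<forall>(l,r,c)\<in>set bs. l \<in> set xs \<and> r \<in> set xs \<and> l < r" and A: "A \<in> sets lborel"
  shows "val bs A = (\<Sum>j=1..length xs - 1. sum_list (map (\<lambda>(l,r,c). if l \<le> pt xs j \<and> pt xs (Suc j) \<le> r then c else 0) bs) * measure lborel (A \<inter> {pt xs j..pt xs (Suc j)}))"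
  using bs
proof (induction bs)
  case Nil
  then show ?case by (simp add: val_def)
next
  case (Cons bl bs)
  obtain l r c where bl: "bl = (l, r, c)" by (cases bl) auto
  have h: "l \<in> set xs" "r \<in> set xs" "l < r" using Cons(2) bl by auto
  have "val (bl # bs) A = c * measure lborel (A \<inter> {l..r}) + val bs A" by (simp add: val_def bl)
  also have "val bs A = (\<Sum>j=1..length xs - 1. sum_list (map (\<lambda>(l,r,c). if l \<le> pt xs j \<and> pt xs (Suc j) \<le> r then c else 0) bs) * measure lborel (A \<inter> {pt xs j..pt xs (Suc j)}))"
    using Cons by auto
  also note block_decomp[OF sw h A, of c]
  finally show ?case by (simp add: bl sum.distrib[symmetric] distrib_right)
qed




definition Psi :: "real list \<Rightarrow> real \<Rightarrow> real" where
  "Psi xs y = xs!0 + (\<Sum>i=1..length xs - 1. (pt xs (Suc i) - pt xs i) * max 0 (min 1 (y - real i)))"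

lemma pt_mono: "sorted xs \<Longrightarrow> 1 \<le> i \<Longrightarrow> i < length xs \<Longrightarrow> pt xs i \<le> pt xs (Suc i)"
  unfolding pt_def by (auto intro: sorted_nth_mono)

lemma Psi_mono:
  assumes "sorted xs" "y \<le> y'"
  shows "Psi xs y \<le> Psi xs y'"
  unfolding Psi_def
proof -
  have "(\<Sum>i=1..length xs - 1. (pt xs (Suc i) - pt xs i) * max 0 (min 1 (y - real i)))
      \<le> (\<Sum>i=1..length xs - 1. (pt xs (Suc i) - pt xs i) * max 0 (min 1 (y' - real i)))"
  proof (rule sum_mono)
    fix i assume "i \<in> {1..length xs - 1}"
    then have "0 \<le> pt xs (Suc i) - pt xs i" using pt_mono[OF assms(1)] by fastforce
    moreover have "max 0 (min 1 (y - real i)) \<le> max 0 (min 1 (y' - real i))" using assms(2) by auto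
    ultimately show "(pt xs (Suc i) - pt xs i) * max 0 (min 1 (y - real i)) \<le> (pt xs (Suc i) - pt xs i) * max 0 (min 1 (y' - real i))"
      by (metis mult_left_mono)
  qed
  then show "xs ! 0 + (\<Sum>i = 1..length xs - 1. (pt xs (Suc i) - pt xs i) * max 0 (min 1 (y - real i)))
    \<le> xs ! 0 + (\<Sum>i = 1..length xs - 1. (pt xs (Suc i) - pt xs i) * max 0 (min 1 (y' - real i)))" by simp
qed

lemma tele_pt: "(\<Sum>i\<in>{1..<j}. pt xs (Suc i) - pt xs i) = pt xs j - xs!0" if "1 \<le> j" for j
  using that
proof (induction j)
  case 0 then show ?case by simp
next
  case (Suc j)
  show ?case
  proof (cases "j = 0")
    case True then show ?thesis by (simp add: pt_def)
  next
    case False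
    then have "{1..<Suc j} = insert j {1..<j}" by auto
    then show ?thesis using Suc False by simp
  qed
qed

lemma Psi_aff:
  assumes "1 \<le> j" "j \<le> length xs - 1" "real j \<le> y" "y \<le> real j + 1"
  shows "Psi xs y = pt xs j + (pt xs (Suc j) - pt xs j) * (y - real j)"
proof -
  define f where "f i = (pt xs (Suc i) - pt xs i) * max 0 (min 1 (y - real i))" for i
  have split: "{1..length xs - 1} = {1..<j} \<union> {j} \<union> {Suc j..length xs - 1}" using assms by auto
  have s1: "(\<Sum>i\<in>{1..<j}. f i) = pt xs j - xs!0"
  proof -
    have "(\<Sum>i\<in>{1..<j}. f i) = (\<Sum>i\<in>{1..<j}. pt xs (Suc i) - pt xs i)"
    proof (rule sum.cong[OF refl])
      fix i assume "i \<in> {1..<j}"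
      then have "real i + 1 \<le> real j" by auto
      then have "max 0 (min 1 (y - real i)) = 1" using assms by auto
      then show "f i = pt xs (Suc i) - pt xs i" by (simp add: f_def)
    qed
    then show ?thesis using tele_pt[OF assms(1)] by simp
  qed
  have s3: "(\<Sum>i\<in>{Suc j..length xs - 1}. f i) = 0"
  proof (rule sum.neutral, rule ballI)
    fix i assume "i \<in> {Suc j..length xs - 1}"
    then have "real j + 1 \<le> real i" by auto
    then have "max 0 (min 1 (y - real i)) = 0" using assms by auto
    then show "f i = 0" by (simp add: f_def)
  qed
  have s2: "f j = (pt xs (Suc j) - pt xs j) * (y - real j)" using assms by (simp add: f_def)
  have "(\<Sum>i=1..length xs - 1. f i) = (\<Sum>i\<in>{1..<j}. f i) + f j + (\<Sum>i\<in>{Suc j..length xs - 1}. f i)"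
    unfolding split by (subst sum.union_disjoint, auto)+
  then show ?thesis unfolding Psi_def f_def[symmetric] using s1 s2 s3 by simp
qed

lemma Psi_pt: "1 \<le> j \<Longrightarrow> j \<le> length xs - 1 \<Longrightarrow> Psi xs (real j) = pt xs j"
  by (simp add: Psi_aff)

lemma Psi_pt1: "1 \<le> j \<Longrightarrow> j \<le> length xs - 1 \<Longrightarrow> Psi xs (real j + 1) = pt xs (Suc j)"
  by (simp add: Psi_aff)

lemma Psi_max: "sorted xs \<Longrightarrow> Psi xs (max u v) = max (Psi xs u) (Psi xs v)"
  using Psi_mono[of xs u v] Psi_mono[of xs v u] by (cases "u \<le> v") (auto simp: max_def)

lemma Psi_min: "sorted xs \<Longrightarrow> Psi xs (min u v) = min (Psi xs u) (Psi xs v)"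
  using Psi_mono[of xs u v] Psi_mono[of xs v u] by (cases "u \<le> v") (auto simp: min_def)

lemma Psi_diff:
  assumes "sorted xs" "1 \<le> j" "j \<le> length xs - 1" "real j \<le> u" "v \<le> real j + 1"
  shows "max 0 (Psi xs v - Psi xs u) = (pt xs (Suc j) - pt xs j) * max 0 (v - u)"
proof (cases "u \<le> v")
  case True
  have l: "0 \<le> pt xs (Suc j) - pt xs j" using pt_mono[OF assms(1)] assms by fastforce
  have "Psi xs v - Psi xs u = (pt xs (Suc j) - pt xs j) * (v - u)"
    using Psi_aff[of j xs u] Psi_aff[of j xs v] assms True by (simp add: algebra_simps)
  then show ?thesis using True l by (simp add: max_def)
next
  case False
  then have "Psi xs v \<le> Psi xs u" using Psi_mono[OF assms(1)] by simp
  then show ?thesis using False by simp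
qed




lemma hgt_facts:
  fixes b L :: real
  assumes "sorted_wrt (<) hs" "\<forall>h\<in>set hs. b \<le> h \<and> h \<le> b + L" "0 < L"
  shows "sorted (b # hs @ [b + L])"
proof -
  have "sorted hs" using assms(1) by (rule strict_sorted_imp_sorted)
  then show ?thesis using assms by (auto simp: sorted_append)
qed

lemma hgt_mono:
  fixes b L :: real
  assumes "sorted_wrt (<) hs" "\<forall>h\<in>set hs. b \<le> h \<and> h \<le> b + L" "0 < L" "t \<le> t'" "t' \<le> Suc (length hs)"
  shows "hgt b L hs t \<le> hgt b L hs t'"
  unfolding hgt_def using sorted_nth_mono[OF hgt_facts[OF assms(1-3)], of t t'] assms(4,5) by simp

lemma hgt0[simp]: "hgt b L hs 0 = b" by (simp add: hgt_def)
lemma hgtS: "i < length hs \<Longrightarrow> hgt b L hs (Suc i) = hs!i" by (simp add: hgt_def nth_append)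
lemma hgtH[simp]: "hgt b L hs (Suc (length hs)) = b + L" by (simp add: hgt_def nth_append)

definition CC :: "real \<Rightarrow> real \<Rightarrow> real list \<Rightarrow> real \<Rightarrow> nat \<Rightarrow> real" where
  "CC b L hs X t = max (hgt b L hs t) (of_int \<lfloor>X\<rfloor>) + (X - of_int \<lfloor>X\<rfloor>) *
     (min (hgt b L hs (Suc t)) (of_int \<lfloor>X\<rfloor> + 1) - max (hgt b L hs t) (of_int \<lfloor>X\<rfloor>))"

definition TT :: "real list \<Rightarrow> real list \<Rightarrow> real \<Rightarrow> nat" where
  "TT xs hs x = card {i. i < length hs \<and> Psi xs (hs!i) \<le> x}"

definition GG :: "real list \<Rightarrow> real \<Rightarrow> real \<Rightarrow> real list \<Rightarrow> (nat \<Rightarrow> real option) \<Rightarrow> (nat \<Rightarrow> bool) \<Rightarrow> nat \<Rightarrow> real \<Rightarrow> bool" where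
  "GG xs b L hs vert ori t x = (case vert t of Some X \<Rightarrow> (ori t \<longleftrightarrow> x < Psi xs (CC b L hs X t)) | None \<Rightarrow> ori t)"

definition gg :: "real list \<Rightarrow> real \<Rightarrow> real \<Rightarrow> real list \<Rightarrow> (nat \<Rightarrow> real option) \<Rightarrow> (nat \<Rightarrow> bool) \<Rightarrow> real \<Rightarrow> bool" where
  "gg xs b L hs vert ori x = GG xs b L hs vert ori (TT xs hs x) x"

lemma TT_le: "TT xs hs x \<le> length hs"
proof -
  have "{i. i < length hs \<and> Psi xs (hs!i) \<le> x} \<subseteq> {..<length hs}" by auto
  then show ?thesis unfolding TT_def by (metis card_lessThan card_mono finite_lessThan)
qed

lemma sand_lt:
  fixes U :: "real set"
  assumes "{lo<..<hi} \<subseteq> U" "U \<subseteq> {lo..hi}"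
  shows "{lo<..<min hi C} \<subseteq> U \<inter> {x. x < C}" "U \<inter> {x. x < C} \<subseteq> {lo..min hi C}"
  using assms by auto

lemma sand_ge:
  fixes U :: "real set"
  assumes "{lo<..<hi} \<subseteq> U" "U \<subseteq> {lo..hi}"
  shows "{max lo C<..<hi} \<subseteq> U \<inter> {x. \<not> x < C}" "U \<inter> {x. \<not> x < C} \<subseteq> {max lo C..hi}"
  using assms by auto

locale sq =
  fixes xs :: "real list" and a b L :: real and hs :: "real list"
    and vert :: "nat \<Rightarrow> real option" and ori :: "nat \<Rightarrow> bool" and j :: nat
  assumes sx: "sorted xs" and hsw: "sorted_wrt (<) hs" and hsb: "\<forall>h\<in>set hs. b \<le> h \<and> h \<le> b + L"
    and Lp: "0 < L"
    and j1: "1 \<le> j" "j \<le> length xs - 1"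
    and jb: "b \<le> real j" "real j + 1 \<le> b + L"
    and ja: "a \<le> real j" "real j + 1 \<le> a + L"
begin

abbreviation "H \<equiv> length hs"
abbreviation "hg \<equiv> hgt b L hs"
abbreviation "Ps \<equiv> Psi xs"
abbreviation "Ij \<equiv> {pt xs j..pt xs (Suc j)}"

lemma hgm: "t \<le> t' \<Longrightarrow> t' \<le> Suc H \<Longrightarrow> hg t \<le> hg t'"
  using hgt_mono[OF hsw hsb Lp] by blast

lemma Psj: "Ps (real j) = pt xs j" "Ps (real j + 1) = pt xs (Suc j)"
  using Psi_pt[OF j1] Psi_pt1[OF j1] by auto

lemma Psm: "u \<le> v \<Longrightarrow> Ps u \<le> Ps v" using Psi_mono[OF sx] by blast

lemma strip_sand:
  assumes t: "t \<le> H"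
  defines "lo \<equiv> Ps (max (hg t) (real j))" and "hi \<equiv> Ps (min (hg (Suc t)) (real j + 1))"
  shows "{lo<..<hi} \<subseteq> {x \<in> Ij. TT xs hs x = t}" "{x \<in> Ij. TT xs hs x = t} \<subseteq> {lo..hi}"
proof -
  have lo: "lo = max (Ps (hg t)) (pt xs j)" unfolding lo_def Psi_max[OF sx] Psj ..
  have hi: "hi = min (Ps (hg (Suc t))) (pt xs (Suc j))" unfolding hi_def Psi_min[OF sx] Psj ..
  show "{lo<..<hi} \<subseteq> {x \<in> Ij. TT xs hs x = t}"
  proof
    fix x assume x: "x \<in> {lo<..<hi}"
    have "{i. i < H \<and> Ps (hs!i) \<le> x} = {..<t}"
    proof (intro set_eqI iffI)
      fix i assume i: "i \<in> {i. i < H \<and> Ps (hs!i) \<le> x}"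
      show "i \<in> {..<t}"
      proof (rule ccontr)
        assume "i \<notin> {..<t}"
        then have "hg (Suc t) \<le> hg (Suc i)" using i by (intro hgm) auto
        then have "Ps (hg (Suc t)) \<le> Ps (hs!i)" using i hgtS[of i hs b L] Psm by auto
        then show False using i x hi by auto
      qed
    next
      fix i assume i: "i \<in> {..<t}"
      then have "hg (Suc i) \<le> hg t" using t by (intro hgm) auto
      then have "Ps (hs!i) \<le> Ps (hg t)" using i t hgtS[of i hs b L] Psm by auto
      then show "i \<in> {i. i < H \<and> Ps (hs!i) \<le> x}" using i t x lo by auto
    qed
    then have "TT xs hs x = t" by (simp add: TT_def)
    then show "x \<in> {x \<in> Ij. TT xs hs x = t}" using x lo hi by auto
  qed
  show "{x \<in> Ij. TT xs hs x = t} \<subseteq> {lo..hi}"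
  proof
    fix x assume x: "x \<in> {x \<in> Ij. TT xs hs x = t}"
    have fin: "finite {i. i < H \<and> Ps (hs!i) \<le> x}" by auto
    have a1: "Ps (hg t) \<le> x"
    proof (cases t)
      case 0
      then show ?thesis using Psm[OF jb(1)] Psj x by auto
    next
      case (Suc t0)
      show ?thesis
      proof (rule ccontr)
        assume c: "\<not> Ps (hg t) \<le> x"
        have "{i. i < H \<and> Ps (hs!i) \<le> x} \<subseteq> {..<t0}"
        proof
          fix i assume i: "i \<in> {i. i < H \<and> Ps (hs!i) \<le> x}"
          show "i \<in> {..<t0}"
          proof (rule ccontr)
            assume "i \<notin> {..<t0}"
            then have "hg t \<le> hg (Suc i)" using i Suc by (intro hgm) auto
            then have "Ps (hg t) \<le> Ps (hs!i)" using i hgtS[of i hs b L] Psm by auto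
            then show False using i c by auto
          qed
        qed
        then have "TT xs hs x \<le> t0" unfolding TT_def by (metis card_lessThan card_mono finite_lessThan)
        then show False using x Suc by auto
      qed
    qed
    have a2: "x \<le> Ps (hg (Suc t))"
    proof (cases "t = H")
      case True
      then show ?thesis using Psm[OF jb(2)] Psj x by auto
    next
      case False
      then have tH: "t < H" using t by auto
      show ?thesis
      proof (rule ccontr)
        assume c: "\<not> x \<le> Ps (hg (Suc t))"
        have "{..t} \<subseteq> {i. i < H \<and> Ps (hs!i) \<le> x}"
        proof
          fix i assume i: "i \<in> {..t}"
          then have "hg (Suc i) \<le> hg (Suc t)" using tH by (intro hgm) auto
          then have "Ps (hs!i) \<le> Ps (hg (Suc t))" using i tH hgtS[of i hs b L] Psm by auto
          then show "i \<in> {i. i < H \<and> Ps (hs!i) \<le> x}" using i tH c by auto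
        qed
        then have "Suc t \<le> TT xs hs x" unfolding TT_def by (metis card_atMost card_mono fin)
        then show False using x by auto
      qed
    qed
    show "x \<in> {lo..hi}" using a1 a2 x lo hi by auto
  qed
qed


definition "Dt t = {x \<in> Ij. TT xs hs x = t \<and> GG xs b L hs vert ori t x}"
definition "At t = {x \<in> {real j..real j+1}. case vert t of Some X \<Rightarrow> (if ori t then x < X else X < x) | None \<Rightarrow> ori t}"
definition "Pt t = {hg t..hg (Suc t)} \<inter> {real j..real j+1}"

lemma D_meas:
  assumes t: "t \<le> H"
  shows "Dt t \<in> fmeasurable lborel" "At t \<in> fmeasurable lborel" "Pt t \<in> fmeasurable lborel"
    "measure lborel (Dt t) = (pt xs (Suc j) - pt xs j) * (measure lborel (At t) * measure lborel (Pt t))"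
proof -
  define p0 where "p0 = max (hg t) (real j)"
  define p1 where "p1 = min (hg (Suc t)) (real j + 1)"
  define U where "U = {x \<in> Ij. TT xs hs x = t}"
  define len where "len = pt xs (Suc j) - pt xs j"
  have sU: "{Ps p0<..<Ps p1} \<subseteq> U" "U \<subseteq> {Ps p0..Ps p1}"
    using strip_sand[OF t] unfolding U_def p0_def p1_def by auto
  have P: "Pt t = {p0..p1}" unfolding Pt_def p0_def p1_def by auto
  have Pm: "Pt t \<in> fmeasurable lborel" "measure lborel (Pt t) = max 0 (p1 - p0)"
  proof -
    have ss: "{p0<..<p1} \<subseteq> {p0..p1}" "{p0..p1} \<subseteq> {p0..p1}" by (auto simp del: greaterThanLessThan_subseteq_atLeastAtMost_iff)
    show "Pt t \<in> fmeasurable lborel" "measure lborel (Pt t) = max 0 (p1 - p0)"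
      unfolding P using sandwich(2)[OF ss] fm_Icc by auto
  qed
  show "Pt t \<in> fmeasurable lborel" by (rule Pm(1))
  have h01: "hg t \<le> hg (Suc t)" using t by (intro hgm) auto
  have p0j: "real j \<le> p0" and p1j: "p1 \<le> real j + 1" unfolding p0_def p1_def by auto
  have "(Dt t \<in> fmeasurable lborel \<and> At t \<in> fmeasurable lborel) \<and>
      measure lborel (Dt t) = len * (measure lborel (At t) * measure lborel (Pt t))"
  proof (cases "vert t")
    case None
    show ?thesis
    proof (cases "ori t")
      case True
      have D: "Dt t = U" unfolding Dt_def U_def GG_def using None True by auto
      have A: "At t = {real j..real j + 1}" unfolding At_def using None True by auto
      have "measure lborel (Dt t) = max 0 (Ps p1 - Ps p0)" unfolding D using sandwich[OF sU] by simp
      also have "\<dots> = len * max 0 (p1 - p0)" unfolding len_def by (rule Psi_diff[OF sx j1 p0j p1j])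
      finally show ?thesis unfolding A using D sandwich_fm[OF sU] Pm by (auto simp: fm_Icc)
    next
      case False
      have D: "Dt t = {}" unfolding Dt_def GG_def using None False by auto
      have A: "At t = {}" unfolding At_def using None False by auto
      show ?thesis unfolding D A by auto
    qed
  next
    case (Some X)
    define C where "C = CC b L hs X t"
    have ar: "max 0 (min (min (hg (Suc t)) (of_int (int j)+1)) C - max (hg t) (of_int (int j))) = max 0 (min (of_int (int j)+1) X - of_int (int j)) * max 0 (min (hg (Suc t)) (of_int (int j)+1) - max (hg t) (of_int (int j))) \<and>
     max 0 (min (hg (Suc t)) (of_int (int j)+1) - max (max (hg t) (of_int (int j))) C) = max 0 (of_int (int j)+1 - max (of_int (int j)) X) * max 0 (min (hg (Suc t)) (of_int (int j)+1) - max (hg t) (of_int (int j)))"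
      unfolding C_def CC_def by (rule cc_arith[OF h01])
    then have ar1: "max 0 (min p1 C - p0) = max 0 (min (real j+1) X - real j) * max 0 (p1 - p0)"
      and ar2: "max 0 (p1 - max p0 C) = max 0 (real j+1 - max (real j) X) * max 0 (p1 - p0)"
      unfolding p0_def p1_def by auto
    show ?thesis
    proof (cases "ori t")
      case True
      have D: "Dt t = U \<inter> {x. x < Ps C}" unfolding Dt_def U_def GG_def C_def using Some True by auto
      have A: "At t = {x \<in> {real j..real j+1}. x < X}" unfolding At_def using Some True by auto
      have sA: "{real j<..<min (real j+1) X} \<subseteq> At t" "At t \<subseteq> {real j..min (real j+1) X}" unfolding A by auto
      note sD = sand_lt[OF sU, of "Ps C"]
      have "measure lborel (Dt t) = max 0 (min (Ps p1) (Ps C) - Ps p0)" unfolding D using sandwich[OF sD] by simp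
      also have "\<dots> = max 0 (Ps (min p1 C) - Ps p0)" by (simp add: Psi_min[OF sx])
      also have "\<dots> = len * max 0 (min p1 C - p0)" unfolding len_def
        by (rule Psi_diff[OF sx j1 p0j]) (use p1j in auto)
      finally show ?thesis using sandwich[OF sA] sandwich_fm[OF sA] sandwich_fm[OF sD] D Pm ar1 by auto
    next
      case False
      have D: "Dt t = U \<inter> {x. \<not> x < Ps C}" unfolding Dt_def U_def GG_def C_def using Some False by auto
      have A: "At t = {x \<in> {real j..real j+1}. X < x}" unfolding At_def using Some False by auto
      have sA: "{max (real j) X<..<real j+1} \<subseteq> At t" "At t \<subseteq> {max (real j) X..real j+1}" unfolding A by auto
      note sD = sand_ge[OF sU, of "Ps C"]
      have "measure lborel (Dt t) = max 0 (Ps p1 - max (Ps p0) (Ps C))" unfolding D using sandwich[OF sD] by simp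
      also have "\<dots> = max 0 (Ps p1 - Ps (max p0 C))" by (simp add: Psi_max[OF sx])
      also have "\<dots> = len * max 0 (p1 - max p0 C)" unfolding len_def
        by (rule Psi_diff[OF sx j1 _ p1j]) (use p0j in auto)
      finally show ?thesis using sandwich[OF sA] sandwich_fm[OF sA] sandwich_fm[OF sD] D Pm ar2 by auto
    qed
  qed
  then show "Dt t \<in> fmeasurable lborel" "At t \<in> fmeasurable lborel"
    "measure lborel (Dt t) = (pt xs (Suc j) - pt xs j) * (measure lborel (At t) * measure lborel (Pt t))"
    unfolding len_def by auto
qed


lemma one_d:
  shows "{x \<in> Ij. gg xs b L hs vert ori x} \<in> sets lborel"
    "measure lborel {x \<in> Ij. gg xs b L hs vert ori x} = (\<Sum>t\<in>{0..H}. measure lborel (Dt t))"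
proof -
  have eq: "{x \<in> Ij. gg xs b L hs vert ori x} = (\<Union>t\<in>{0..H}. Dt t)"
    unfolding Dt_def gg_def using TT_le by fastforce
  have fm: "\<And>t. t \<in> {0..H} \<Longrightarrow> Dt t \<in> fmeasurable lborel" using D_meas by auto
  show "{x \<in> Ij. gg xs b L hs vert ori x} \<in> sets lborel" unfolding eq
  proof (rule sets.finite_UN)
    show "\<And>t. t \<in> {0..H} \<Longrightarrow> Dt t \<in> sets lborel" using fm by (meson fmeasurableD)
  qed auto
  show "measure lborel {x \<in> Ij. gg xs b L hs vert ori x} = (\<Sum>t\<in>{0..H}. measure lborel (Dt t))"
    unfolding eq by (rule measure_UNION'[OF _ fm]) (auto simp: pairwise_def disjnt_def Dt_def)
qed

lemma sq_sub: "square j \<subseteq> {a..a+L} \<times> {b..b+L}"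
  using ja jb by (auto simp: square_def)

lemma two_d_eq: "Rplus a b L hs vert ori \<inter> square j = (\<Union>t\<in>{0..H}. At t \<times> Pt t)"
  using ja unfolding Rplus_def At_def Pt_def square_def by (auto split: option.splits)

lemma two_d:
  shows "Rplus a b L hs vert ori \<inter> square j \<in> fmeasurable lborel"
    "measure lborel (Rplus a b L hs vert ori \<inter> square j) = (\<Sum>t\<in>{0..H}. measure lborel (At t) * measure lborel (Pt t))"
proof -
  have fm: "\<And>t. t \<in> {0..H} \<Longrightarrow> At t \<times> Pt t \<in> fmeasurable lborel"
    using D_meas prod_meas by auto
  show "Rplus a b L hs vert ori \<inter> square j \<in> fmeasurable lborel"
    unfolding two_d_eq using fm by (intro fmeasurable.finite_UN) auto
  have pw: "pairwise (\<lambda>s t. AE x in lborel. x \<notin> At s \<times> Pt s \<or> x \<notin> At t \<times> Pt t) {0..H}"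
  proof (unfold pairwise_def, intro ballI impI)
    fix s t assume st: "s \<in> {0..H}" "t \<in> {0..H}" "s \<noteq> t"
    define u where "u = min s t"
    define w where "w = max s t"
    have uw: "u < w" "w \<le> H" using st by (auto simp: u_def w_def)
    define N where "N = {real j..real j + 1} \<times> {hg (Suc u)..hg (Suc u)}"
    have N: "N \<in> null_sets lborel"
    proof -
      have "N \<in> fmeasurable lborel" "measure lborel N = 0"
        unfolding N_def using prod_meas[OF fm_Icc fm_Icc, of "real j" "real j + 1" "hg (Suc u)" "hg (Suc u)"] by auto
      then show ?thesis by (auto simp: emeasure_eq_measure2 null_sets_def)
    qed
    have sub: "(At s \<times> Pt s) \<inter> (At t \<times> Pt t) \<subseteq> N"
    proof
      fix p assume p: "p \<in> (At s \<times> Pt s) \<inter> (At t \<times> Pt t)"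
      then have p': "p \<in> (At u \<times> Pt u) \<inter> (At w \<times> Pt w)" unfolding u_def w_def by (cases "s \<le> t") auto
      have "hg (Suc u) \<le> hg w" using uw by (intro hgm) auto
      then show "p \<in> N" using p' unfolding N_def At_def Pt_def by (cases p) auto
    qed
    show "AE x in lborel. x \<notin> At s \<times> Pt s \<or> x \<notin> At t \<times> Pt t"
      by (rule AE_I'[OF N]) (use sub in auto)
  qed
  show "measure lborel (Rplus a b L hs vert ori \<inter> square j) = (\<Sum>t\<in>{0..H}. measure lborel (At t) * measure lborel (Pt t))"
    unfolding two_d_eq
    by (subst measure_UNION_AE[OF _ fm pw]) (auto intro!: sum.cong prod_meas D_meas)
qed

lemma sq_eq:
  "measure lborel {x \<in> Ij. gg xs b L hs vert ori x} = (pt xs (Suc j) - pt xs j) * measure lborel (Rplus a b L hs vert ori \<inter> square j)"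
  unfolding one_d two_d sum_distrib_left using D_meas by auto

lemma square_meas: "square j \<in> fmeasurable lborel" "measure lborel (square j) = 1"
  unfolding square_def using prod_meas[OF fm_Icc fm_Icc, of "real j" "real j + 1" "real j" "real j + 1"] by auto

lemma minus_eq: "measure lborel (Rminus a b L hs vert ori \<inter> square j) = 1 - measure lborel (Rplus a b L hs vert ori \<inter> square j)"
proof -
  have "Rminus a b L hs vert ori \<inter> square j = square j - (Rplus a b L hs vert ori \<inter> square j)"
    unfolding Rminus_def using sq_sub by auto
  then show ?thesis using measure_Diff[of lborel "square j" "Rplus a b L hs vert ori \<inter> square j"] square_meas two_d(1)
    by (auto simp: fmeasurable_def)
qed

end



lemma card_cons_lt:
  "card {i. i < length (t # ts) \<and> (t # ts) ! i < (x::real)} = (if t < x then 1 else 0) + card {i. i < length ts \<and> ts ! i < x}"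
proof -
  have "{i. i < length (t # ts) \<and> (t # ts) ! i < x} = (if t < x then {0} else {}) \<union> Suc ` {i. i < length ts \<and> ts ! i < x}"
  proof (intro set_eqI iffI)
    fix i assume i: "i \<in> {i. i < length (t # ts) \<and> (t # ts) ! i < x}"
    show "i \<in> (if t < x then {0} else {}) \<union> Suc ` {i. i < length ts \<and> ts ! i < x}"
    proof (cases i)
      case 0 then show ?thesis using i by simp
    next
      case (Suc i')
      then have "i' \<in> {i. i < length ts \<and> ts ! i < x}" using i by simp
      then show ?thesis using Suc by blast
    qed
  next
    fix i assume i: "i \<in> (if t < x then {0} else {}) \<union> Suc ` {i. i < length ts \<and> ts ! i < x}"
    show "i \<in> {i. i < length (t # ts) \<and> (t # ts) ! i < x}"
    proof (cases "i \<in> Suc ` {i. i < length ts \<and> ts ! i < x}")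
      case True then show ?thesis by auto
    next
      case False
      then have "i = 0" "t < x" using i by (auto split: if_splits)
      then show ?thesis by simp
    qed
  qed
  moreover have "card (Suc ` {i. i < length ts \<and> ts ! i < x}) = card {i. i < length ts \<and> ts ! i < x}"
    by (rule card_image) auto
  ultimately show ?thesis by (auto simp: card_insert_if)
qed

lemma card_pred_borel: "{x::real. P (card {i. i < length ts \<and> ts!i < x})} \<in> sets borel"
proof (induction ts arbitrary: P)
  case Nil
  then show ?case by (cases "P 0") auto
next
  case (Cons t ts)
  have "{x::real. P (card {i. i < length (t#ts) \<and> (t#ts)!i < x})} =
      ({x. t < x} \<inter> {x. (\<lambda>c. P (1 + c)) (card {i. i < length ts \<and> ts!i < x})}) \<union>
      ({x. \<not> t < x} \<inter> {x. P (card {i. i < length ts \<and> ts!i < x})})"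
    unfolding card_cons_lt by auto
  moreover have "{x::real. t < x} \<in> sets borel" by simp
  moreover have "{x::real. \<not> t < x} \<in> sets borel" by (simp add: not_less)
  ultimately show ?case using Cons[of P] Cons[of "\<lambda>c. P (1 + c)"] by auto
qed

lemma ch_part_meas: "ch_part ts s \<in> sets lborel"
proof -
  have "ch_part ts s = {0..1} \<inter> {x. (\<lambda>c. even c = s) (card {i. i < length ts \<and> ts!i < x})}"
    unfolding ch_part_def by auto
  then show ?thesis using card_pred_borel[of "\<lambda>c. even c = s" ts] by auto
qed

lemma sum_pairs:
  fixes f :: "nat \<Rightarrow> nat" and H :: nat
  shows "(\<Sum>t\<in>{1..H}. (f (t - 1) + f t)) + f 0 + f H = 2 * (\<Sum>t\<in>{0..H}. f t)"
proof (induction H)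
  case 0 then show ?case by simp
next
  case (Suc H)
  have "(\<Sum>t\<in>{1..Suc H}. (f (t - 1) + f t)) = (\<Sum>t\<in>{1..H}. (f (t - 1) + f t)) + f H + f (Suc H)" by simp
  moreover have "(\<Sum>t\<in>{0..Suc H}. f t) = (\<Sum>t\<in>{0..H}. f t) + f (Suc H)" by simp
  ultimately show ?case using Suc by simp
qed

lemma turns_count:
  assumes "ymono_scpath a b L hs vert ori"
  shows "length hs + card {t \<in> {0..length hs}. vert t \<noteq> None} \<le> sc_turns hs vert + 1"
proof -
  define H where "H = length hs"
  define f where "f t = (if vert t \<noteq> None then 1 else 0 :: nat)" for t
  have V: "card {t \<in> {0..H}. vert t \<noteq> None} = (\<Sum>t\<in>{0..H}. f t)"
    unfolding f_def by (simp add: sum.If_cases Int_def)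
  have K: "sc_turns hs vert = (\<Sum>t\<in>{1..H}. (f (t - 1) + f t))"
    unfolding sc_turns_def f_def H_def by simp
  show ?thesis
  proof (cases "H = 0")
    case True
    then have "vert 0 \<noteq> None" using assms by (simp add: ymono_scpath_def H_def)
    then show ?thesis using True unfolding H_def[symmetric] V K by (simp add: f_def)
  next
    case False
    have mid: "(\<Sum>t\<in>{1..<H}. f t) = H - 1"
    proof -
      have "(\<Sum>t\<in>{1..<H}. f t) = (\<Sum>t\<in>{1..<H}. 1)"
        using assms by (intro sum.cong) (auto simp: f_def ymono_scpath_def H_def)
      then show ?thesis by simp
    qed
    have "{0..H} = insert 0 (insert H {1..<H})" using False by auto
    then have "(\<Sum>t\<in>{0..H}. f t) = f 0 + f H + (H - 1)" using False mid by simp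
    moreover note sum_pairs[of f H]
    ultimately show ?thesis unfolding H_def[symmetric] V K by simp
  qed
qed

lemma meas_eq_fin:
  fixes A B :: "real set"
  assumes "A \<in> sets lborel" "B \<in> sets lborel" "finite F" "A - F = B - F"
  shows "measure lborel A = measure lborel B"
proof -
  have N: "F \<in> null_sets lborel" using assms(3) by (rule finite_imp_null_set_lborel)
  have "measure lborel A = measure lborel (A - F)" using measure_Diff_null_set[OF assms(1) N] by simp
  also have "\<dots> = measure lborel (B - F)" using assms(4) by simp
  also have "\<dots> = measure lborel B" using measure_Diff_null_set[OF assms(2) N] by simp
  finally show ?thesis .
qed

definition Qset :: "real list \<Rightarrow> real \<Rightarrow> real \<Rightarrow> real list \<Rightarrow> (nat \<Rightarrow> real option) \<Rightarrow> real set" where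
  "Qset xs b L hs vert = Psi xs ` set hs \<union> (\<lambda>t. Psi xs (CC b L hs (the (vert t)) t)) ` {t \<in> {0..length hs}. vert t \<noteq> None}"

lemma Qset_fin: "finite (Qset xs b L hs vert)" by (simp add: Qset_def)

lemma Qset_card: "card (Qset xs b L hs vert) \<le> length hs + card {t \<in> {0..length hs}. vert t \<noteq> None}"
proof -
  have "card (Qset xs b L hs vert) \<le> card (Psi xs ` set hs) + card ((\<lambda>t. Psi xs (CC b L hs (the (vert t)) t)) ` {t \<in> {0..length hs}. vert t \<noteq> None})"
    unfolding Qset_def by (rule card_Un_le)
  also have "\<dots> \<le> length hs + card {t \<in> {0..length hs}. vert t \<noteq> None}"
  proof (rule add_mono)
    have "card (Psi xs ` set hs) \<le> card (set hs)" by (rule card_image_le) simp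
    also have "\<dots> \<le> length hs" by (rule card_length)
    finally show "card (Psi xs ` set hs) \<le> length hs" .
    show "card ((\<lambda>t. Psi xs (CC b L hs (the (vert t)) t)) ` {t \<in> {0..length hs}. vert t \<noteq> None}) \<le> card {t \<in> {0..length hs}. vert t \<noteq> None}"
      by (rule card_image_le) simp
  qed
  finally show ?thesis .
qed

lemma gg_cell:
  assumes "x \<le> y" "{x..y} \<inter> Qset xs b L hs vert = {}"
  shows "gg xs b L hs vert ori x = gg xs b L hs vert ori y"
proof -
  have "{i. i < length hs \<and> Psi xs (hs!i) \<le> x} = {i. i < length hs \<and> Psi xs (hs!i) \<le> y}"
  proof (intro Collect_cong conj_cong refl iffI)
    fix i assume i: "i < length hs" 
    then have "Psi xs (hs!i) \<in> Qset xs b L hs vert" unfolding Qset_def by auto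
    then have "Psi xs (hs!i) \<notin> {x..y}" using assms(2) by blast
    moreover assume "Psi xs (hs!i) \<le> x" 
    ultimately show "Psi xs (hs!i) \<le> y" using assms(1) by auto
  next
    fix i assume i: "i < length hs" 
    then have "Psi xs (hs!i) \<in> Qset xs b L hs vert" unfolding Qset_def by auto
    then have "Psi xs (hs!i) \<notin> {x..y}" using assms(2) by blast
    moreover assume "Psi xs (hs!i) \<le> y" 
    ultimately show "Psi xs (hs!i) \<le> x" by auto
  qed
  then have T: "TT xs hs x = TT xs hs y" by (simp add: TT_def)
  define t where "t = TT xs hs x"
  have tH: "t \<le> length hs" unfolding t_def by (rule TT_le)
  have "GG xs b L hs vert ori t x = GG xs b L hs vert ori t y"
  proof (cases "vert t")
    case None then show ?thesis by (simp add: GG_def)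
  next
    case (Some X)
    then have "Psi xs (CC b L hs X t) \<in> Qset xs b L hs vert" unfolding Qset_def using tH by force
    then have "Psi xs (CC b L hs X t) \<notin> {x..y}" using assms(2) by blast
    then have "(x < Psi xs (CC b L hs X t)) = (y < Psi xs (CC b L hs X t))" using assms(1) by auto
    then show ?thesis using Some by (simp add: GG_def)
  qed
  then show ?thesis unfolding gg_def T t_def[symmetric] using T t_def by simp
qed




theorem mainTheorem13:
  fixes n k' k :: nat and B :: "nat \<Rightarrow> block list" and \<epsilon> a b L :: real
    and hs :: "real list" and vert :: "nat \<Rightarrow> real option" and ori :: "nat \<Rightarrow> bool"
  assumes blocks: "\<forall>i \<in> {1..n}. block_valuation k' (B i)"
    and Lpos: "0 < L"
    and bounding: "\<forall>j \<in> {1..length (poi n B) - 1}. square j \<subseteq> {a..a + L} \<times> {b..b + L}"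
    and path: "ymono_scpath a b L hs vert ori"
    and turns: "sc_turns hs vert = k"
    and balanced: "\<forall>i \<in> {1..n}.
        \<bar>mu B (poi n B) i (Rplus a b L hs vert ori) - mu B (poi n B) i (Rminus a b L hs vert ori)\<bar> \<le> \<epsilon>"
  shows "\<exists>ts s. sorted ts \<and> set ts \<subseteq> {0..1} \<and> length ts \<le> k + 1 \<and>
           (\<forall>i \<in> {1..n}. \<bar>val (B i) (ch_part ts s) - val (B i) (ch_part ts (\<not> s))\<bar> \<le> \<epsilon>)"
proof -
  define S where "S = (\<Union>i\<in>{1..n}. \<Union>(l, r, c) \<in> set (B i). {l, r})"
  define xs where "xs = poi n B"
  have finS: "finite S" unfolding S_def by (auto split: prod.splits)
  have setxs: "set xs = S" unfolding xs_def poi_def S_def[symmetric] using finS by simp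
  have sw: "sorted_wrt (<) xs" unfolding xs_def poi_def by simp
  have sx: "sorted xs" using sw by (rule strict_sorted_imp_sorted)
  have blk: "\<forall>(l,r,c)\<in>set (B i). l \<in> set xs \<and> r \<in> set xs \<and> l < r" if i: "i \<in> {1..n}" for i
  proof (intro ballI, clarify)
    fix l r c assume lr: "(l, r, c) \<in> set (B i)"
    have "l < r" using blocks i lr unfolding block_valuation_def by fastforce
    moreover have "l \<in> S" "r \<in> S" using i lr unfolding S_def by fastforce+
    ultimately show "l \<in> set xs \<and> r \<in> set xs \<and> l < r" using setxs by auto
  qed
  have xs01: "set xs \<subseteq> {0..1}"
  proof
    fix x assume "x \<in> set xs"
    then obtain i l r c where i: "i \<in> {1..n}" and lr: "(l, r, c) \<in> set (B i)" and x: "x = l \<or> x = r"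
      unfolding setxs S_def by auto
    have "0 \<le> l \<and> l < r \<and> r \<le> 1" using blocks i lr unfolding block_valuation_def by fastforce
    then show "x \<in> {0..1}" using x by auto
  qed
  have hsw: "sorted_wrt (<) hs" and hsb: "\<forall>h\<in>set hs. b \<le> h \<and> h \<le> b + L"
    using path unfolding ymono_scpath_def by auto
  have sqj: "sq xs a b L hs j" if j: "j \<in> {1..length xs - 1}" for j
  proof -
    have sub: "square j \<subseteq> {a..a + L} \<times> {b..b + L}" using bounding j unfolding xs_def by blast
    have "(real j, real j) \<in> square j" "(real j + 1, real j + 1) \<in> square j" by (auto simp: square_def)
    then have "a \<le> real j" "real j + 1 \<le> a + L" "b \<le> real j" "real j + 1 \<le> b + L" using sub by auto
    then show ?thesis using j sx hsw hsb Lpos by unfold_locales auto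
  qed
  have Ij01: "{pt xs j..pt xs (Suc j)} \<subseteq> {0..1}" if j: "j \<in> {1..length xs - 1}" for j
  proof -
    have "pt xs j \<in> set xs" "pt xs (Suc j) \<in> set xs" using j unfolding pt_def by auto
    then show ?thesis using xs01 by auto
  qed
  have ptm: "pt xs j \<le> pt xs (Suc j)" if j: "j \<in> {1..length xs - 1}" for j
    using pt_mono[OF sx] j by auto
  define Q where "Q = Qset xs b L hs vert"
  define Qc where "Qc = Q \<inter> {0..1}"
  define cl where "cl x = max 0 (min 1 x)" for x :: real
  define f where "f x = gg xs b L hs vert ori (cl x)" for x
  have finQc: "finite Qc" unfolding Qc_def Q_def using Qset_fin by auto
  have cell: "\<forall>x y. x \<le> y \<longrightarrow> {x..y} \<inter> Qc = {} \<longrightarrow> f x = f y"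
  proof (intro allI impI)
    fix x y :: real assume xy: "x \<le> y" and E: "{x..y} \<inter> Qc = {}"
    show "f x = f y"
    proof (cases "cl x = cl y")
      case True then show ?thesis by (simp add: f_def)
    next
      case False
      then have "x \<le> 1" "0 \<le> y" using xy unfolding cl_def by auto
      then have sub: "{cl x..cl y} \<subseteq> {x..y} \<inter> {0..1}" using xy unfolding cl_def by auto
      have "cl x \<le> cl y" using xy unfolding cl_def by auto
      moreover have "{cl x..cl y} \<inter> Q = {}" using E sub unfolding Qc_def by blast
      ultimately show ?thesis unfolding f_def Q_def by (rule gg_cell)
    qed
  qed
  obtain ts s where ts: "sorted ts" "set ts \<subseteq> Qc" "length ts \<le> card Qc"
    and par: "\<forall>x. x \<notin> Qc \<longrightarrow> (even (card {i. i < length ts \<and> ts!i < x}) = s) = f x"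
    using cuts_exist[OF finQc cell] by blast
  have len: "length ts \<le> k + 1"
  proof -
    have "card Qc \<le> card Q" unfolding Qc_def Q_def by (rule card_mono[OF Qset_fin]) auto
    also have "\<dots> \<le> length hs + card {t \<in> {0..length hs}. vert t \<noteq> None}" unfolding Q_def by (rule Qset_card)
    also have "\<dots> \<le> k + 1" using turns_count[OF path] turns by simp
    finally show ?thesis using ts(3) by simp
  qed
  define M where "M j = measure lborel (ch_part ts s \<inter> {pt xs j..pt xs (Suc j)})" for j
  define rho where "rho j = measure lborel (Rplus a b L hs vert ori \<inter> square j)" for j
  define len where "len j = pt xs (Suc j) - pt xs j" for j
  have Mj: "M j = len j * rho j" if j: "j \<in> {1..length xs - 1}" for j
  proof -
    interpret sq xs a b L hs vert ori j by (rule sqj[OF j])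
    have "M j = measure lborel {x \<in> {pt xs j..pt xs (Suc j)}. gg xs b L hs vert ori x}"
      unfolding M_def
    proof (rule meas_eq_fin[OF _ one_d(1) finQc])
      show "ch_part ts s \<inter> {pt xs j..pt xs (Suc j)} \<in> sets lborel" using ch_part_meas by auto
      show "ch_part ts s \<inter> {pt xs j..pt xs (Suc j)} - Qc = {x \<in> {pt xs j..pt xs (Suc j)}. gg xs b L hs vert ori x} - Qc"
      proof (intro set_eqI iffI)
        fix x assume x: "x \<in> ch_part ts s \<inter> {pt xs j..pt xs (Suc j)} - Qc"
        then have x01: "x \<in> {0..1}" using Ij01[OF j] by auto
        then have "cl x = x" unfolding cl_def by auto
        then show "x \<in> {x \<in> {pt xs j..pt xs (Suc j)}. gg xs b L hs vert ori x} - Qc"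
          using x par unfolding ch_part_def f_def by auto
      next
        fix x assume x: "x \<in> {x \<in> {pt xs j..pt xs (Suc j)}. gg xs b L hs vert ori x} - Qc"
        then have x01: "x \<in> {0..1}" using Ij01[OF j] by auto
        then have "cl x = x" unfolding cl_def by auto
        then show "x \<in> ch_part ts s \<inter> {pt xs j..pt xs (Suc j)} - Qc"
          using x x01 par unfolding ch_part_def f_def by auto
      qed
    qed
    also have "\<dots> = len j * rho j" unfolding len_def rho_def by (rule sq_eq)
    finally show ?thesis .
  qed
  have Mneg: "measure lborel (ch_part ts (\<not> s) \<inter> {pt xs j..pt xs (Suc j)}) = len j - M j"
    if j: "j \<in> {1..length xs - 1}" for j
  proof -
    have "ch_part ts (\<not> s) \<inter> {pt xs j..pt xs (Suc j)} = {pt xs j..pt xs (Suc j)} - (ch_part ts s \<inter> {pt xs j..pt xs (Suc j)})"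
      using Ij01[OF j] unfolding ch_part_def by auto
    then show ?thesis
      using measure_Diff[of lborel "{pt xs j..pt xs (Suc j)}" "ch_part ts s \<inter> {pt xs j..pt xs (Suc j)}"]
        ch_part_meas[of ts s] ptm[OF j] fm_Icc[of "pt xs j" "pt xs (Suc j)"]
      unfolding M_def len_def by (auto simp: fmeasurable_def)
  qed
  have rneg: "measure lborel (Rminus a b L hs vert ori \<inter> square j) = 1 - rho j"
    if j: "j \<in> {1..length xs - 1}" for j
  proof -
    interpret sq xs a b L hs vert ori j by (rule sqj[OF j])
    show ?thesis unfolding rho_def by (rule minus_eq)
  qed
  show ?thesis
  proof (intro exI[of _ ts] exI[of _ s] conjI ballI)
    show "sorted ts" by (rule ts(1))
    show "set ts \<subseteq> {0..1}" using ts(2) unfolding Qc_def by auto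
    show "length ts \<le> k + 1" by (rule len)
    fix i assume i: "i \<in> {1..n}"
    define d where "d j = dens B xs i j" for j
    have vp: "val (B i) (ch_part ts s) = (\<Sum>j=1..length xs - 1. d j * M j)"
      unfolding d_def dens_def M_def by (rule val_decomp[OF sw blk[OF i] ch_part_meas])
    have vm: "val (B i) (ch_part ts (\<not> s)) = (\<Sum>j=1..length xs - 1. d j * (len j - M j))"
      unfolding val_decomp[OF sw blk[OF i] ch_part_meas] d_def dens_def
      by (rule sum.cong[OF refl]) (simp add: Mneg)
    have mp: "mu B xs i (Rplus a b L hs vert ori) = (\<Sum>j=1..length xs - 1. d j * len j * rho j)"
      unfolding mu_def d_def len_def rho_def ..
    have mm: "mu B xs i (Rminus a b L hs vert ori) = (\<Sum>j=1..length xs - 1. d j * len j * (1 - rho j))"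
      unfolding mu_def d_def len_def by (rule sum.cong[OF refl]) (simp add: rneg[unfolded len_def])
    have "val (B i) (ch_part ts s) - val (B i) (ch_part ts (\<not> s))
        = mu B xs i (Rplus a b L hs vert ori) - mu B xs i (Rminus a b L hs vert ori)"
      unfolding vp vm mp mm sum_subtractf[symmetric]
      by (rule sum.cong[OF refl]) (simp add: Mj algebra_simps)
    then show "\<bar>val (B i) (ch_part ts s) - val (B i) (ch_part ts (\<not> s))\<bar> \<le> \<epsilon>"
      using balanced i unfolding xs_def by simp
  qed
qed


end
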